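(* For every odd $k\ge3$, the map $p\in[0,p_k^\star]\mapsto\varphi^-_{p,k}$ is increasing.
   Context: For odd $k$, $p,x\in[0,1]$: $F_{p,k}(x)=\Pr[\mathrm{Bin}(k,(1-p)x)\ge(k+1)/2]$. $p_k^\star\in[1/9,1/2)$ is the (unique) value such that for $0\le p<p_k^\star$ the equation $F_{p,k}(x)=x$ on $[0,1]$ has exactly three solutions $0<\varphi^-_{p,k}<\varphi^+_{p,k}$; for $p=p_k^\star$ exactly two solutions $0$ and $\varphi_{p,k}$, and one sets $\varphi^-_{p_k^\star,k}=\varphi^+_{p_k^\star,k}=\varphi_{p_k^\star,k}$; for $p>p_k^\star$ only $0$. *)

theory Defs
  imports "HOL-Analysis.Analysis"
begin

text \<open>F_{p,k}(x) = Pr[Bin(k,(1-p)x) >= (k+1)/2], written out as the binomial tail sum.\<close>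
definition F :: "real \<Rightarrow> nat \<Rightarrow> real \<Rightarrow> real" where
  "F p k x = (\<Sum>i\<in>{(k+1) div 2..k}. real (k choose i) * ((1-p)*x)^i * (1 - (1-p)*x)^(k-i))"

definition fixpts :: "real \<Rightarrow> nat \<Rightarrow> real set" where
  "fixpts p k = {x \<in> {0..1}. F p k x = x}"

definition pstar :: "nat \<Rightarrow> real" where
  "pstar k = (THE p. 1/9 \<le> p \<and> p < 1/2 \<and>
      (\<forall>q. 0 \<le> q \<and> q < p \<longrightarrow> card (fixpts q k) = 3) \<and>
      card (fixpts p k) = 2 \<and>
      (\<forall>q. p < q \<and> q \<le> 1 \<longrightarrow> fixpts q k = {0}))"

definition phi_minus :: "real \<Rightarrow> nat \<Rightarrow> real" where
  "phi_minus p k = Inf (fixpts p k - {0})"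

end

theory Submission imports Defs begin

definition Gm :: "nat \<Rightarrow> real \<Rightarrow> real" where
  "Gm m y = (\<Sum>i\<in>{m+1..2*m+1}. real ((2*m+1) choose i) * y^i * (1-y)^(2*m+1-i))"

definition bt :: "nat \<Rightarrow> nat \<Rightarrow> real \<Rightarrow> real" where
  "bt n j y = real (n choose j) * y^j * (1-y)^(n-j)"

lemma term_deriv:
  assumes "j \<le> n"
  shows "((\<lambda>y. real (Suc n choose Suc j) * y^(Suc j) * (1-y)^(Suc n - Suc j)) has_real_derivative
     real (Suc n) * (bt n j y - bt n (Suc j) y)) (at y)"
proof -
  have e1: "real (Suc j) * real (Suc n choose Suc j) = real (Suc n) * real (n choose j)"
    using binomial_absorption[of j "Suc n"] by (metis diff_Suc_1 of_nat_mult)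
  have e2: "real (n - j) * real (Suc n choose Suc j) = real (Suc n) * real (n choose Suc j)"
    using binomial_absorb_comp[of "Suc n" "Suc j"] by (metis diff_Suc_1 diff_Suc_Suc of_nat_mult)
  show ?thesis
  proof (cases "j = n")
    case True
    have "((\<lambda>y. y^(Suc n)) has_real_derivative real (Suc n) * y^n) (at y)"
      by (rule derivative_eq_intros refl)+ simp
    then show ?thesis using True unfolding bt_def by (simp add: binomial_eq_0)
  next
    case False
    then obtain d where d: "n - j = Suc d" using assms by (metis Suc_diff_Suc le_neq_implies_less)
    have d2: "n - Suc j = d" using d by simp
    define A where "A = real (Suc n choose Suc j)"
    define B where "B = real (n choose j)"
    define Bs where "Bs = real (n choose Suc j)"
    have e1': "real (Suc j) * A = real (Suc n) * B" using e1 by (simp add: A_def B_def)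
    have e2': "real (Suc d) * A = real (Suc n) * Bs" using e2 d by (simp add: A_def Bs_def)
    have D: "((\<lambda>y. A * y^(Suc j) * (1-y)^(Suc d)) has_real_derivative
       A * (real (Suc j) * y^j) * (1-y)^(Suc d) + A * y^(Suc j) * (real (Suc d) * (1-y)^d * (-1))) (at y)"
      by (rule derivative_eq_intros refl)+ simp
    have "A * (real (Suc j) * y^j) * (1-y)^(Suc d) + A * y^(Suc j) * (real (Suc d) * (1-y)^d * (-1))
        = (real (Suc j) * A) * y^j * (1-y)^(Suc d) - (real (Suc d) * A) * y^(Suc j) * (1-y)^d"
      by (simp add: algebra_simps)
    also have "\<dots> = real (Suc n) * (B * y^j * (1-y)^(Suc d) - Bs * y^(Suc j) * (1-y)^d)"
      unfolding e1' e2' by (simp add: algebra_simps)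
    finally have "A * (real (Suc j) * y^j) * (1-y)^(Suc d) + A * y^(Suc j) * (real (Suc d) * (1-y)^d * (-1))
        = real (Suc n) * (bt n j y - bt n (Suc j) y)"
      unfolding bt_def B_def Bs_def d d2 .
    then show ?thesis using D unfolding A_def d diff_Suc_Suc by simp
  qed
qed

definition gm :: "nat \<Rightarrow> real \<Rightarrow> real" where
  "gm m y = real (2*m+1) * real ((2*m) choose m) * (y*(1-y))^m"

lemma Gm_alt: "Gm m y = (\<Sum>j\<in>{m..2*m}. real (Suc (2*m) choose Suc j) * y^(Suc j) * (1-y)^(Suc (2*m) - Suc j))"
proof -
  have "Gm m y = (\<Sum>i\<in>{Suc m..Suc (2*m)}. real (Suc (2*m) choose i) * y^i * (1-y)^(Suc (2*m) - i))"
    unfolding Gm_def by simp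
  also have "\<dots> = (\<Sum>j\<in>{m..2*m}. real (Suc (2*m) choose Suc j) * y^(Suc j) * (1-y)^(Suc (2*m) - Suc j))"
    by (rule sum.shift_bounds_cl_Suc_ivl)
  finally show ?thesis .
qed

lemma Gm_deriv: "(Gm m has_real_derivative gm m y) (at y)"
proof -
  have eq: "Gm m = (\<lambda>y. \<Sum>j\<in>{m..2*m}. real (Suc (2*m) choose Suc j) * y^(Suc j) * (1-y)^(Suc (2*m) - Suc j))"
    using Gm_alt by blast
  have D: "(Gm m has_real_derivative (\<Sum>j\<in>{m..2*m}. real (Suc (2*m)) * (bt (2*m) j y - bt (2*m) (Suc j) y))) (at y)"
    unfolding eq by (rule DERIV_sum) (rule term_deriv, simp)
  have s1: "(\<Sum>j\<in>{m..2*m}. bt (2*m) (Suc j) y - bt (2*m) j y) = bt (2*m) (Suc (2*m)) y - bt (2*m) m y"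
    by (rule sum_Suc_diff) simp
  have s2: "(\<Sum>j\<in>{m..2*m}. real (Suc (2*m)) * (bt (2*m) j y - bt (2*m) (Suc j) y))
      = - real (Suc (2*m)) * (\<Sum>j\<in>{m..2*m}. bt (2*m) (Suc j) y - bt (2*m) j y)"
  proof -
    have a: "(\<Sum>j\<in>{m..2*m}. real (Suc (2*m)) * (bt (2*m) j y - bt (2*m) (Suc j) y))
      = real (Suc (2*m)) * (\<Sum>j\<in>{m..2*m}. (bt (2*m) j y - bt (2*m) (Suc j) y))"
      by (rule sum_distrib_left[symmetric])
    have b: "(\<Sum>j\<in>{m..2*m}. (bt (2*m) j y - bt (2*m) (Suc j) y)) = - (\<Sum>j\<in>{m..2*m}. bt (2*m) (Suc j) y - bt (2*m) j y)"
      by (simp only: sum_subtractf)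
    show ?thesis unfolding a b by (simp only: mult_minus_left mult_minus_right)
  qed
  have "(\<Sum>j\<in>{m..2*m}. real (Suc (2*m)) * (bt (2*m) j y - bt (2*m) (Suc j) y)) = gm m y"
  proof -
    have z: "bt (2*m) (Suc (2*m)) y = 0" unfolding bt_def by (simp add: binomial_eq_0)
    have w: "bt (2*m) m y = real ((2*m) choose m) * (y*(1-y))^m" unfolding bt_def
      by (simp add: power_mult_distrib mult_2)
    show ?thesis unfolding s2 s1 z w gm_def by (simp add: algebra_simps)
  qed
  then show ?thesis using D by simp
qed


lemma Gm_cont: "continuous_on S (Gm m)"
  by (meson DERIV_isCont Gm_deriv continuous_at_imp_continuous_on)

lemma Gm0: "Gm m 0 = 0"
  unfolding Gm_def by (auto intro!: sum.neutral)

lemma Gm1: "Gm m 1 = 1"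
proof -
  have "Gm m 1 = (\<Sum>i\<in>{m+1..2*m}. real ((2*m+1) choose i) * 1^i * (1-1::real)^(2*m+1-i)) + 1"
    unfolding Gm_def by (simp add: sum.cl_ivl_Suc[where n="2*m"])
  also have "(\<Sum>i\<in>{m+1..2*m}. real ((2*m+1) choose i) * 1^i * (1-1::real)^(2*m+1-i)) = 0"
    by (auto intro!: sum.neutral)
  finally show ?thesis by simp
qed

definition Km :: "nat \<Rightarrow> real" where "Km m = real (2*m+1) * real ((2*m) choose m)"

lemma Km_pos: "Km m > 0" unfolding Km_def by simp

lemma gm_Km: "gm m y = Km m * (y*(1-y))^m" unfolding gm_def Km_def by simp

lemma gm_pos: "0 < y \<Longrightarrow> y < 1 \<Longrightarrow> gm m y > 0"
  unfolding gm_Km using Km_pos by simp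

lemma gm_nonneg: "0 \<le> y \<Longrightarrow> y \<le> 1 \<Longrightarrow> gm m y \<ge> 0"
  unfolding gm_Km using Km_pos[of m] by (intro mult_nonneg_nonneg zero_le_power) auto

definition dgm :: "nat \<Rightarrow> real \<Rightarrow> real" where
  "dgm m y = Km m * (real m * (y*(1-y))^(m-1) * (1 - 2*y))"

lemma gm_deriv: "(gm m has_real_derivative dgm m y) (at y)"
  unfolding gm_Km dgm_def
  by (rule derivative_eq_intros refl)+ (simp add: algebra_simps)

definition um :: "nat \<Rightarrow> real \<Rightarrow> real" where
  "um m y = y * gm m y - Gm m y"

lemma um_deriv: "(um m has_real_derivative y * dgm m y) (at y)"
  unfolding um_def
  by (rule derivative_eq_intros refl gm_deriv Gm_deriv)+ simp

lemma um_cont: "continuous_on S (um m)"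
  by (meson DERIV_isCont um_deriv continuous_at_imp_continuous_on)

lemma um0: "um m 0 = 0" unfolding um_def Gm0 by simp

lemma um1: "m \<ge> 1 \<Longrightarrow> um m 1 = -1" unfolding um_def Gm1 gm_Km by simp

lemma Gm_strict_mono: "0 \<le> a \<Longrightarrow> a < b \<Longrightarrow> b \<le> 1 \<Longrightarrow> Gm m a < Gm m b"
  by (rule DERIV_pos_imp_increasing_open[OF _ _ Gm_cont]) (auto intro!: exI Gm_deriv gm_pos)

lemma Gm_bounds: "0 \<le> y \<Longrightarrow> y \<le> 1 \<Longrightarrow> 0 \<le> Gm m y \<and> Gm m y \<le> 1"
  using Gm_strict_mono[of 0 y m] Gm_strict_mono[of y 1 m] Gm0 Gm1
  by (cases "y = 0"; cases "y = 1") auto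

lemma um_inc: "m \<ge> 1 \<Longrightarrow> 0 \<le> a \<Longrightarrow> a < b \<Longrightarrow> b \<le> 1/2 \<Longrightarrow> um m a < um m b"
  by (rule DERIV_pos_imp_increasing_open[OF _ _ um_cont])
     (auto intro!: exI um_deriv mult_pos_pos simp: dgm_def Km_pos)

lemma um_dec: "m \<ge> 1 \<Longrightarrow> 1/2 \<le> a \<Longrightarrow> a < b \<Longrightarrow> b \<le> 1 \<Longrightarrow> um m a > um m b"
proof (rule DERIV_neg_imp_decreasing_open[OF _ _ um_cont])
  fix x assume m: "m \<ge> 1" and "1/2 \<le> a" "a < x" "x < b" "b \<le> 1"
  then have x: "1/2 < x" "x < 1" by auto
  have "dgm m x < 0" unfolding dgm_def using x m Km_pos
    by (intro mult_pos_neg) (auto intro!: mult_pos_pos)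
  then show "\<exists>y. (um m has_real_derivative y) (at x) \<and> y < 0"
    using x by (intro exI[of _ "x * dgm m x"]) (auto intro!: um_deriv mult_pos_neg)
qed


lemma ys_exists:
  assumes m: "m \<ge> 1"
  shows "\<exists>ys. 1/2 < ys \<and> ys < 1 \<and> (\<forall>y. 0 < y \<and> y < ys \<longrightarrow> um m y > 0) \<and>
            (\<forall>y. ys < y \<and> y \<le> 1 \<longrightarrow> um m y < 0)"
proof -
  have h0: "um m (1/2) > 0" using um_inc[OF m, of 0 "1/2"] um0 by simp
  obtain ys where ys: "1/2 \<le> ys" "ys \<le> 1" "um m ys = 0"
    using IVT2'[of "um m" 1 0 "1/2", OF _ _ _ um_cont] h0 um1[OF m] by auto
  have ys1: "ys \<noteq> 1/2"
  proof
    assume e: "ys = 1/2"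
    show False using h0 ys(3) unfolding e by simp
  qed
  have ys2: "ys \<noteq> 1" using um1[OF m] ys by auto
  show ?thesis
  proof (intro exI conjI allI impI)
    show "1/2 < ys" "ys < 1" using ys ys1 ys2 by auto
    fix y assume y: "0 < y \<and> y < ys"
    show "um m y > 0"
    proof (cases "y \<le> 1/2")
      case True then show ?thesis using um_inc[OF m, of 0 y] um0 y by simp
    next
      case False then show ?thesis using um_dec[OF m, of y ys] ys y by simp
    qed
  next
    fix y assume y: "ys < y \<and> y \<le> 1"
    show "um m y < 0" using um_dec[OF m, of ys y] ys ys1 y by simp
  qed
qed

definition hm :: "nat \<Rightarrow> real \<Rightarrow> real" where "hm m y = Gm m y / y"

lemma hm_deriv: "y \<noteq> 0 \<Longrightarrow> (hm m has_real_derivative um m y / y^2) (at y)"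
  unfolding hm_def[abs_def] um_def
  by (rule derivative_eq_intros refl Gm_deriv)+ (auto simp: power2_eq_square)

lemma hm_cont: "0 < a \<Longrightarrow> continuous_on {a..b} (hm m)"
  unfolding hm_def[abs_def]
  by (intro continuous_on_divide Gm_cont continuous_on_id) auto

lemma hm1: "hm m 1 = 1" unfolding hm_def Gm1 by simp

lemma hm_inc:
  assumes "\<forall>y. 0 < y \<and> y < ys \<longrightarrow> um m y > 0" "0 < a" "a < b" "b \<le> ys"
  shows "hm m a < hm m b"
  by (rule DERIV_pos_imp_increasing_open[OF _ _ hm_cont]) (use assms in \<open>auto intro!: exI hm_deriv\<close>)

lemma hm_dec:
  assumes "\<forall>y. ys < y \<and> y \<le> 1 \<longrightarrow> um m y < 0" "ys \<le> a" "a < b" "b \<le> 1" "ys > 0"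
  shows "hm m a > hm m b"
  by (rule DERIV_neg_imp_decreasing_open[OF _ _ hm_cont]) (use assms in \<open>auto intro!: exI hm_deriv divide_neg_pos\<close>)

lemma hm_small:
  assumes m: "m \<ge> 1"
  shows "\<exists>y. 0 < y \<and> y < 1/2 \<and> hm m y < 1"
proof -
  define K where "K = Km m"
  have K1: "K \<ge> 3"
  proof -
    have "((2*m) choose m) \<ge> 1" using zero_less_binomial[of m "2*m"] by linarith
    then have c: "real ((2*m) choose m) \<ge> 1" by simp
    have "real (2*m+1) \<ge> 3" using m by simp
    then have "3 * 1 \<le> real (2*m+1) * real ((2*m) choose m)" using c by (intro mult_mono) auto
    then show ?thesis unfolding K_def Km_def by simp
  qed
  define y where "y = 1/(2*K)"
  have y: "0 < y" "y < 1/2" using K1 unfolding y_def by (auto simp: field_simps)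
  obtain z where z: "0 < z" "z < y" "Gm m y - Gm m 0 = (y - 0) * gm m z"
    using MVT2[of 0 y "Gm m" "gm m"] Gm_deriv y by auto
  have "gm m z \<le> K * (z*(1-z))"
  proof -
    have a1: "0 \<le> z*(1-z)" using z y by (intro mult_nonneg_nonneg) auto
    have a2: "z*(1-z) \<le> 1" using z y by (intro mult_le_one) auto
    note a = a1 a2
    have "(z*(1-z))^m \<le> (z*(1-z))^1" by (rule power_decreasing) (use a m in auto)
    then show ?thesis unfolding gm_Km K_def using Km_pos[of m] by simp
  qed
  also have "\<dots> \<le> K * z" using z y K1 by (intro mult_left_mono) (auto simp: algebra_simps)
  also have "\<dots> < K * y" using z K1 by simp
  also have "\<dots> = 1/2" unfolding y_def using K1 by simp
  finally have "hm m y < 1/2" unfolding hm_def using z y Gm0 by simp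
  then show ?thesis using y by auto
qed


lemma binom_id: "Suc m * ((2*m+2) choose Suc m) = 2*(2*m+1)*((2*m) choose m)"
proof -
  have s: "(2*m+1) choose m = (2*m+1) choose Suc m"
    using binomial_symmetric[of m "2*m+1"] by simp
  have a: "(2*m+2) choose Suc m = 2 * ((2*m+1) choose Suc m)"
    using binomial_Suc_Suc[of "2*m+1" m] s by simp
  have b: "Suc m * ((2*m+1) choose Suc m) = (2*m+1) * ((2*m) choose m)"
    using Suc_times_binomial[of m "2*m"] by simp
  have "Suc m * ((2*m+2) choose Suc m) = 2 * (Suc m * ((2*m+1) choose Suc m))"
    unfolding a by simp
  then show ?thesis unfolding b by simp
qed

lemma Km_Suc: "real (Suc m) * Km (Suc m) = 2 * real (2*m+3) * Km m"
proof -
  have "real (Suc m * ((2*m+2) choose Suc m)) = real (2*(2*m+1)*((2*m) choose m))"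
    using binom_id by (simp only:)
  then have e: "real (Suc m) * real ((2*m+2) choose Suc m) = 2*real (2*m+1)* real ((2*m) choose m)"
    by (simp only: of_nat_mult of_nat_numeral)
  have i1: "2 * Suc m + 1 = 2*m+3" "2 * Suc m = 2*m+2" "2*m+2+1 = 2*m+3" by simp_all
  have "real (Suc m) * Km (Suc m) = real (2*m+3) * (real (Suc m) * real ((2*m+2) choose Suc m))"
    unfolding Km_def i1 by (simp only: mult_ac)
  also have "\<dots> = 2 * real (2*m+3) * Km m" unfolding e Km_def by (simp add: algebra_simps)
  finally show ?thesis .
qed

lemma Gm_1_34: "Gm 1 (3/4) = 27/32"
proof -
  have e: "{1+1..2*1+1::nat} = {2,3}" by auto
  have c: "(3::nat) choose 2 = 3" by (simp add: choose_two)
  show ?thesis unfolding Gm_def e by (simp add: c power2_eq_square power3_eq_cube)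
qed

lemma Gm_step:
  assumes m: "m \<ge> 1"
  shows "Gm m (3/4) \<le> Gm (Suc m) (3/4)"
proof -
  define \<phi> where "\<phi> t = Gm (Suc m) t - Gm m t" for t
  have D: "(\<phi> has_real_derivative gm (Suc m) t - gm m t) (at t)" for t
    unfolding \<phi>_def[abs_def] by (rule derivative_eq_intros Gm_deriv refl)+
  have KK: "Km (Suc m) * (3/16) \<le> Km m"
  proof -
    have "real (Suc m) * (Km (Suc m) * (3/16)) = (3/8) * real (2*m+3) * Km m"
      using Km_Suc[of m] by (simp add: algebra_simps)
    also have "\<dots> \<le> real (Suc m) * Km m"
      using m Km_pos[of m] by (intro mult_right_mono) auto
    finally show ?thesis by simp
  qed
  have neg: "gm (Suc m) t - gm m t \<le> 0" if t: "3/4 < t" "t < 1" for t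
  proof -
    have p1: "0 \<le> t*(1-t)" using t by (intro mult_nonneg_nonneg) auto
    have "0 \<le> (t - 3/4)*(t - 1/4)" using t by (intro mult_nonneg_nonneg) auto
    moreover have "t*(1-t) = 3/16 - (t - 3/4)*(t - 1/4)" by (simp add: field_simps)
    ultimately have p2: "t*(1-t) \<le> 3/16" by linarith
    note p = p1 p2
    have "gm (Suc m) t = (Km (Suc m) * (t*(1-t))) * (t*(1-t))^m" unfolding gm_Km by simp
    also have "\<dots> \<le> (Km (Suc m) * (3/16)) * (t*(1-t))^m"
      using p Km_pos[of "Suc m"] by (intro mult_right_mono mult_left_mono) auto
    also have "\<dots> \<le> Km m * (t*(1-t))^m" using KK p by (intro mult_right_mono) auto
    finally show ?thesis unfolding gm_Km by simp
  qed
  have cont: "continuous_on {3/4..1} \<phi>"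
    unfolding \<phi>_def[abs_def] by (intro continuous_on_diff Gm_cont)
  have "\<phi> (3/4) \<ge> \<phi> 1"
    by (rule DERIV_nonpos_imp_decreasing_open[OF _ _ cont]) (use D neg in \<open>auto intro!: exI\<close>)
  then show ?thesis unfolding \<phi>_def Gm1 by simp
qed

lemma Gm_34: "m \<ge> 1 \<Longrightarrow> Gm m (3/4) \<ge> 27/32"
proof (induction m rule: dec_induct)
  case base then show ?case using Gm_1_34 by simp
next
  case (step n) then show ?case using Gm_step[of n] by simp
qed


definition lev :: "nat \<Rightarrow> real \<Rightarrow> real set" where
  "lev m L = {y. 0 < y \<and> y \<le> 1 \<and> hm m y = L}"

lemma shape:
  assumes m: "m \<ge> 1"
  obtains ys where "1/2 < ys" "ys < 1"
    "\<And>a b. 0 < a \<Longrightarrow> a < b \<Longrightarrow> b \<le> ys \<Longrightarrow> hm m a < hm m b"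
    "\<And>a b. ys \<le> a \<Longrightarrow> a < b \<Longrightarrow> b \<le> 1 \<Longrightarrow> hm m a > hm m b"
    "9/8 \<le> hm m ys" "hm m ys < 2"
proof -
  obtain ys where ys: "1/2 < ys" "ys < 1" "\<forall>y. 0 < y \<and> y < ys \<longrightarrow> um m y > 0"
    "\<forall>y. ys < y \<and> y \<le> 1 \<longrightarrow> um m y < 0"
    using ys_exists[OF m] by blast
  have inc: "\<And>a b. 0 < a \<Longrightarrow> a < b \<Longrightarrow> b \<le> ys \<Longrightarrow> hm m a < hm m b"
    using hm_inc[OF ys(3)] by blast
  have dec: "\<And>a b. ys \<le> a \<Longrightarrow> a < b \<Longrightarrow> b \<le> 1 \<Longrightarrow> hm m a > hm m b"
    using hm_dec[OF ys(4)] ys(1) by force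
  have h34: "hm m (3/4) \<ge> 9/8" unfolding hm_def using Gm_34[OF m] by simp
  have "hm m (3/4) \<le> hm m ys"
  proof (cases "3/4 \<le> ys")
    case True
    show ?thesis
    proof (cases "3/4 < ys")
      case True then show ?thesis using inc[of "3/4" ys] by simp
    next
      case False
      with \<open>3/4 \<le> ys\<close> have e: "ys = 3/4" by linarith
      show ?thesis unfolding e by (rule order_refl)
    qed
  next
    case False then show ?thesis using dec[of ys "3/4"] by auto
  qed
  then have M1: "9/8 \<le> hm m ys" using h34 by simp
  have "Gm m ys \<le> 1" using Gm_bounds[of ys m] ys by simp
  then have M2: "hm m ys < 2" unfolding hm_def using ys by (simp add: divide_simps)
  show ?thesis using that ys(1,2) inc dec M1 M2 by blast
qed

context
  fixes m :: nat and ys :: real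
  assumes m: "m \<ge> 1" and ys1: "1/2 < ys" and ys2: "ys < 1"
    and inc: "\<And>a b. 0 < a \<Longrightarrow> a < b \<Longrightarrow> b \<le> ys \<Longrightarrow> hm m a < hm m b"
    and dec: "\<And>a b. ys \<le> a \<Longrightarrow> a < b \<Longrightarrow> b \<le> 1 \<Longrightarrow> hm m a > hm m b"
begin

lemma hmax: "0 < y \<Longrightarrow> y \<le> 1 \<Longrightarrow> y \<noteq> ys \<Longrightarrow> hm m y < hm m ys"
  using inc[of y ys] dec[of ys y] by (cases "y < ys") auto

lemma lev_big: "L > hm m ys \<Longrightarrow> lev m L = {}"
  unfolding lev_def using hmax by (force)

lemma lev_M: "lev m (hm m ys) = {ys}"
  unfolding lev_def using hmax ys1 ys2 by force

lemma lev_two: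
  assumes L: "1 \<le> L" "L < hm m ys"
  shows "\<exists>y1 y2. 0 < y1 \<and> y1 < ys \<and> ys < y2 \<and> y2 \<le> 1 \<and> lev m L = {y1, y2}"
proof -
  obtain y0 where y0: "0 < y0" "y0 < 1/2" "hm m y0 < 1" using hm_small[OF m] by blast
  obtain y1 where y1: "y0 \<le> y1" "y1 \<le> ys" "hm m y1 = L"
    using IVT'[of "hm m" y0 L ys, OF _ _ _ hm_cont[OF y0(1)]] y0 L ys1 by auto
  have y1': "y1 < ys" using y1 L by (cases "y1 = ys") auto
  obtain y2 where y2: "ys \<le> y2" "y2 \<le> 1" "hm m y2 = L"
    using IVT2'[of "hm m" 1 L ys, OF _ _ _ hm_cont] hm1 L ys1 ys2 by auto
  have y2': "ys < y2" using y2 L by (cases "y2 = ys") auto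
  have "lev m L = {y1, y2}"
  proof (intro equalityI subsetI)
    fix y assume y: "y \<in> lev m L"
    then have y': "0 < y" "y \<le> 1" "hm m y = L" unfolding lev_def by auto
    show "y \<in> {y1, y2}"
    proof (cases "y \<le> ys")
      case True
      have "y = y1"
      proof (rule ccontr)
        assume "y \<noteq> y1"
        then have "y < y1 \<or> y1 < y" by auto
        then show False using inc[of y y1] inc[of y1 y] True y' y1 y0 by auto
      qed
      then show ?thesis by simp
    next
      case False
      have "y = y2"
      proof (rule ccontr)
        assume "y \<noteq> y2"
        then have "y < y2 \<or> y2 < y" by auto
        then show False using dec[of y y2] dec[of y2 y] False y' y2 by auto
      qed
      then show ?thesis by simp
    qed
  next
    fix y assume "y \<in> {y1, y2}"
    then show "y \<in> lev m L" unfolding lev_def using y1 y2 y0 ys2 by auto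
  qed
  then show ?thesis using y1 y1' y2 y2' y0 by (intro exI[of _ y1] exI[of _ y2]) auto
qed


end

lemma F_eq: "F p (2*m+1) x = Gm m ((1-p)*x)"
proof -
  have "(2*m+1+1) div 2 = m+1" by simp
  then show ?thesis unfolding F_def Gm_def by simp
qed

lemma fixpts_struct:
  assumes p: "p < 1" and p0: "0 \<le> p"
  shows "fixpts p (2*m+1) = insert 0 ((\<lambda>y. y/(1-p)) ` lev m (1/(1-p)))"
proof (intro equalityI subsetI)
  have c: "1 - p > 0" using p by simp
  fix x assume x: "x \<in> fixpts p (2*m+1)"
  then have x1: "0 \<le> x" "x \<le> 1" "Gm m ((1-p)*x) = x" unfolding fixpts_def F_eq by auto
  show "x \<in> insert 0 ((\<lambda>y. y/(1-p)) ` lev m (1/(1-p)))"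
  proof (cases "x = 0")
    case False
    then have xp: "x > 0" using x1 by simp
    have y: "0 < (1-p)*x" using c xp by simp
    have "(1-p)*x \<le> 1" using p0 x1 c by (intro mult_le_one) auto
    moreover have "hm m ((1-p)*x) = 1/(1-p)" unfolding hm_def x1 using c xp by (simp add: field_simps)
    ultimately have "(1-p)*x \<in> lev m (1/(1-p))" unfolding lev_def using y by simp
    moreover have "x = ((1-p)*x)/(1-p)" using c by simp
    ultimately show ?thesis by blast
  qed simp
next
  have c: "1 - p > 0" using p by simp
  fix x assume "x \<in> insert 0 ((\<lambda>y. y/(1-p)) ` lev m (1/(1-p)))"
  then show "x \<in> fixpts p (2*m+1)"
  proof
    assume "x = 0" then show ?thesis unfolding fixpts_def F_eq using Gm0 by simp
  next
    assume "x \<in> (\<lambda>y. y/(1-p)) ` lev m (1/(1-p))"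
    then obtain y where y: "0 < y" "y \<le> 1" "hm m y = 1/(1-p)" and xy: "x = y/(1-p)"
      unfolding lev_def by auto
    have "Gm m y = y * hm m y" using y(1) unfolding hm_def by simp
    then have G: "Gm m y = x" using y(3) xy by simp
    have "0 \<le> x" "x \<le> 1" using Gm_bounds[of y m] y G by auto
    moreover have "F p (2*m+1) x = x" unfolding F_eq xy using c G xy by simp
    ultimately show ?thesis unfolding fixpts_def by simp
  qed
qed

lemma fixpts_one: "fixpts 1 (2*m+1) = {0}"
  unfolding fixpts_def F_eq using Gm0 by auto

lemma card_fix:
  assumes p: "p < 1" and p0: "0 \<le> p" and S: "finite (lev m (1/(1-p)))"
  shows "card (fixpts p (2*m+1)) = Suc (card (lev m (1/(1-p))))"
proof -
  have c: "1 - p > 0" using p by simp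
  have inj: "inj_on (\<lambda>y. y/(1-p)) (lev m (1/(1-p)))" using c by (intro inj_onI) simp
  have n0: "0 \<notin> (\<lambda>y. y/(1-p)) ` lev m (1/(1-p))" using c unfolding lev_def by auto
  show ?thesis unfolding fixpts_struct[OF p p0] using S n0 card_image[OF inj] by simp
qed


theorem lemmaA7:
  fixes k :: nat
  assumes "odd k" and "k \<ge> 3"
  shows "strict_mono_on {0..pstar k} (\<lambda>p. phi_minus p k)"
proof -
  obtain m where k: "k = 2*m+1" using assms(1) oddE by blast
  have m: "m \<ge> 1" using assms(2) k by simp
  obtain ys where ys1: "1/2 < ys" and ys2: "ys < 1"
    and inc: "\<And>a b. 0 < a \<Longrightarrow> a < b \<Longrightarrow> b \<le> ys \<Longrightarrow> hm m a < hm m b"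
    and dec: "\<And>a b. ys \<le> a \<Longrightarrow> a < b \<Longrightarrow> b \<le> 1 \<Longrightarrow> hm m a > hm m b"
    and M1: "9/8 \<le> hm m ys" and M2: "hm m ys < 2"
    using shape[OF m] by blast
  define M where "M = hm m ys"
  define P where "P = 1 - 1/M"
  have Mpos: "M > 0" using M1 unfolding M_def by simp
  have P1: "1/9 \<le> P" using M1 unfolding P_def M_def by (simp add: field_simps)
  have P2: "P < 1/2" using M2 M1 unfolding P_def M_def by (simp add: field_simps)
  have cP: "1/(1-P) = M" unfolding P_def using Mpos by simp
  note lt = lev_two[OF m ys1 ys2 inc dec] and lM = lev_M[OF m ys1 ys2 inc dec]
    and lb = lev_big[OF m ys1 ys2 inc dec]
  have below: "1 \<le> 1/(1-q) \<and> 1/(1-q) < M" if q: "0 \<le> q" "q < P" for q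
  proof
    show "1 \<le> 1/(1-q)" using q P2 by (simp add: field_simps)
    have "1 - P < 1 - q" using q by simp
    then have "1/(1-q) < 1/(1-P)" using P2 by (intro divide_strict_left_mono) auto
    then show "1/(1-q) < M" using cP by simp
  qed
  have card3: "card (fixpts q k) = 3" if q: "0 \<le> q" "q < P" for q
  proof -
    obtain y1 y2 where y: "0 < y1" "y1 < ys" "ys < y2" "y2 \<le> 1" "lev m (1/(1-q)) = {y1, y2}"
      using lt[of "1/(1-q)"] below[OF q] unfolding M_def by blast
    have "card (fixpts q k) = Suc (card (lev m (1/(1-q))))"
      unfolding k using q P2 y(5) by (intro card_fix) auto
    then show ?thesis using y by simp
  qed
  have card2: "card (fixpts P k) = 2"
  proof -
    have "card (fixpts P k) = Suc (card (lev m (1/(1-P))))"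
      unfolding k using P1 P2 cP lM unfolding M_def by (intro card_fix) auto
    then show ?thesis using cP lM unfolding M_def by simp
  qed
  have above: "fixpts q k = {0}" if q: "P < q" "q \<le> 1" for q
  proof (cases "q = 1")
    case True then show ?thesis unfolding k using fixpts_one by simp
  next
    case False
    then have q1: "q < 1" using q by simp
    have "1 - q < 1 - P" using q by simp
    then have "1/(1-P) < 1/(1-q)" using q1 by (intro divide_strict_left_mono) auto
    then have "lev m (1/(1-q)) = {}" using lb cP unfolding M_def by simp
    then show ?thesis unfolding k using fixpts_struct[OF q1] q P1 by simp
  qed
  have pred: "1/9 \<le> P \<and> P < 1/2 \<and> (\<forall>q. 0 \<le> q \<and> q < P \<longrightarrow> card (fixpts q k) = 3) \<and>
      card (fixpts P k) = 2 \<and> (\<forall>q. P < q \<and> q \<le> 1 \<longrightarrow> fixpts q k = {0})"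
    using P1 P2 card3 card2 above by blast
  have ps: "pstar k = P"
    unfolding pstar_def
  proof (rule the_equality)
    show "1/9 \<le> P \<and> P < 1/2 \<and> (\<forall>q. 0 \<le> q \<and> q < P \<longrightarrow> card (fixpts q k) = 3) \<and>
      card (fixpts P k) = 2 \<and> (\<forall>q. P < q \<and> q \<le> 1 \<longrightarrow> fixpts q k = {0})" by (rule pred)
  next
    fix p assume H: "1/9 \<le> p \<and> p < 1/2 \<and> (\<forall>q. 0 \<le> q \<and> q < p \<longrightarrow> card (fixpts q k) = 3) \<and>
      card (fixpts p k) = 2 \<and> (\<forall>q. p < q \<and> q \<le> 1 \<longrightarrow> fixpts q k = {0})"
    show "p = P"
    proof (rule ccontr)
      assume "p \<noteq> P"
      then have "p < P \<or> P < p" by auto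
      then show False
      proof
        assume "p < P" then show False using card3[of p] H by simp
      next
        assume "P < p" then show False using above[of p] H by simp
      qed
    qed
  qed
  have low: "\<exists>yl. 0 < yl \<and> yl \<le> ys \<and> hm m yl = 1/(1-p) \<and> phi_minus p k = yl/(1-p)"
    if p: "0 \<le> p" "p \<le> P" for p
  proof (cases "p = P")
    case True
    have fs: "fixpts P k = insert 0 ((\<lambda>y. y/(1-P)) ` lev m (1/(1-P)))"
      unfolding k using P1 P2 by (intro fixpts_struct) auto
    have lM': "lev m (1/(1-P)) = {ys}" using lM cP unfolding M_def by simp
    have "fixpts p k - {0} = {ys/(1-p)}"
      unfolding True fs lM' using P2 ys1 by auto
    then have "phi_minus p k = ys/(1-p)" unfolding phi_minus_def by simp
    moreover have "hm m ys = 1/(1-p)" using True cP unfolding M_def by simp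
    ultimately show ?thesis using ys1 by (intro exI[of _ ys]) auto
  next
    case False
    then have q: "0 \<le> p" "p < P" using p by auto
    obtain y1 y2 where y: "0 < y1" "y1 < ys" "ys < y2" "y2 \<le> 1" "lev m (1/(1-p)) = {y1, y2}"
      using lt[of "1/(1-p)"] below[OF q] unfolding M_def by blast
    have c: "1 - p > 0" using q P2 by simp
    have fs: "fixpts p k = insert 0 ((\<lambda>y. y/(1-p)) ` lev m (1/(1-p)))"
      unfolding k using q P2 by (intro fixpts_struct) auto
    have "fixpts p k - {0} = {y1/(1-p), y2/(1-p)}"
      unfolding fs y(5) using y c by auto
    moreover have "y1/(1-p) < y2/(1-p)" using y c by (simp add: divide_strict_right_mono)
    ultimately have "phi_minus p k = y1/(1-p)" unfolding phi_minus_def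
      by (simp add: cInf_insert inf_real_def)
    moreover have "hm m y1 = 1/(1-p)" using y(5) unfolding lev_def by auto
    ultimately show ?thesis using y by auto
  qed
  show ?thesis unfolding ps
  proof (rule strict_mono_onI)
    fix r s assume r: "r \<in> {0..P}" and s: "s \<in> {0..P}" and rs: "r < s"
    obtain a where a: "0 < a" "a \<le> ys" "hm m a = 1/(1-r)" "phi_minus r k = a/(1-r)"
      using low[of r] r by auto
    obtain b where b: "0 < b" "b \<le> ys" "hm m b = 1/(1-s)" "phi_minus s k = b/(1-s)"
      using low[of s] s by auto
    have cr: "1 - r > 0" "1 - s > 0" using r s P2 by auto
    have Lrs: "1/(1-r) < 1/(1-s)" using rs cr by (intro divide_strict_left_mono) auto
    have ab: "a < b"
    proof (rule ccontr)
      assume "\<not> a < b"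
      then have "b < a \<or> b = a" by auto
      then show False
      proof
        assume "b < a" then show False using inc[of b a] a b Lrs by simp
      next
        assume "b = a" then show False using a b Lrs by simp
      qed
    qed
    have "a * (1/(1-r)) < b * (1/(1-s))"
      using ab Lrs a(1) cr by (intro mult_strict_mono) auto
    then show "phi_minus r k < phi_minus s k" using a b by simp
  qed
qed

end
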